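(* Let $A$ be a subset of a group $G$. (a) $\operatorname{VC}^\ell_B(A)\leq\operatorname{VC}^\ell_G(A)$ for every $B\subseteq G$. (b) $\operatorname{VC}^\ell_G(A)-1\leq\dim_{\ell\mathrm{VC}}(A)\leq\operatorname{VC}^\ell_G(A)$. (c) $\operatorname{VC}^\ell_G(A)$ equals the dual VC-dimension of $\mathcal F^r_G(A)$; hence $\operatorname{VC}^\ell_G(A)<2\exp(\operatorname{VC}^r_G(A))$ and $\operatorname{VC}^r_G(A)<2\exp(\operatorname{VC}^\ell_G(A))$. (d) $\dim_{\ell\mathrm{VC}}(A)$ equals the dual VC-dimension of $\mathcal F^r_{A^{-1}}(A)$; hence $\dim_{\ell\mathrm{VC}}(A)<2\exp(\operatorname{VC}^r_{A^{-1}}(A))$ and $\operatorname{VC}^r_{A^{-1}}(A)<2\exp(\dim_{\ell\mathrm{VC}}(A))$. (e) The statements obtained from (a)–(d) by exchanging the roles of $\ell$ and $r$ throughout also hold.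
   Context: A set system $\mathcal F$ on $X$ shatters $Y\subseteq X$ if $\{Y\cap S:S\in\mathcal F\}$ is the power set of $Y$; $\operatorname{VC}(\mathcal F)$ is the maximum size of a finite shattered set ($\infty$ if unbounded). The dual system $\mathcal F^*$ is the set system on $\mathcal F$ consisting of the sets $\mathcal F_x=\{S\in\mathcal F:x\in S\}$ for $x\in\bigcup\mathcal F$; the dual VC-dimension of $\mathcal F$ is $\operatorname{VC}(\mathcal F^* )$. For $A,B\subseteq G$: $\mathcal F^\ell_B(A)=\{xA:x\in B\}$, $\mathcal F^r_B(A)=\{Ax:x\in B\}$, $\operatorname{VC}^\bullet_B(A)=\operatorname{VC}(\mathcal F^\bullet_B(A))$ for $\bullet\in\{\ell,r\}$. Sisask's variants: $\mathcal F^\ell(A|B)=\{xA\cap B:x\in BA^{-1}\}$, $\mathcal F^r(A|B)=\{Ax\cap B:x\in A^{-1}B\}$, $\dim_{\bullet\mathrm{VC}}(A|B)=\operatorname{VC}(\mathcal F^\bullet(A|B))$, $\dim_{\bullet\mathrm{VC}}(A)=\dim_{\bullet\mathrm{VC}}(A|A)$. $\exp$ is base $2$. *)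

theory Defs
  imports Main "HOL-Library.Extended_Nat"
begin

text \<open>The group G is the ambient type of class group_add; the group operation
  is written + (not assumed commutative), the inverse is unary minus.
  So xA is (\<lambda>a. x + a) ` A and A x is (\<lambda>a. a + x) ` A.\<close>

definition shatters :: "'a set set \<Rightarrow> 'a set \<Rightarrow> bool" where
  "shatters F Y \<longleftrightarrow> {Y \<inter> S | S. S \<in> F} = Pow Y"

text \<open>VC dimension: supremum (in enat) of sizes of finite shattered sets
  (Sup of the empty set is 0).\<close>
definition VC :: "'a set set \<Rightarrow> enat" where
  "VC F = Sup {enat (card Y) | Y. finite Y \<and> shatters F Y}"

definition dual_sys :: "'a set set \<Rightarrow> 'a set set set" where
  "dual_sys F = {{S \<in> F. x \<in> S} | x. x \<in> \<Union>F}"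

definition dualVC :: "'a set set \<Rightarrow> enat" where
  "dualVC F = VC (dual_sys F)"

definition setinv :: "'a::group_add set \<Rightarrow> 'a set" where
  "setinv A = uminus ` A"

definition setprod :: "'a::group_add set \<Rightarrow> 'a set \<Rightarrow> 'a set" where
  "setprod A B = {a + b | a b. a \<in> A \<and> b \<in> B}"

definition FL :: "'a::group_add set \<Rightarrow> 'a set \<Rightarrow> 'a set set" where
  "FL B A = {(\<lambda>a. x + a) ` A | x. x \<in> B}"

definition FR :: "'a::group_add set \<Rightarrow> 'a set \<Rightarrow> 'a set set" where
  "FR B A = {(\<lambda>a. a + x) ` A | x. x \<in> B}"

definition VCl :: "'a::group_add set \<Rightarrow> 'a set \<Rightarrow> enat" where
  "VCl B A = VC (FL B A)"

definition VCr :: "'a::group_add set \<Rightarrow> 'a set \<Rightarrow> enat" where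
  "VCr B A = VC (FR B A)"

definition FLc :: "'a::group_add set \<Rightarrow> 'a set \<Rightarrow> 'a set set" where
  "FLc A B = {((\<lambda>a. x + a) ` A) \<inter> B | x. x \<in> setprod B (setinv A)}"

definition FRc :: "'a::group_add set \<Rightarrow> 'a set \<Rightarrow> 'a set set" where
  "FRc A B = {((\<lambda>a. a + x) ` A) \<inter> B | x. x \<in> setprod (setinv A) B}"

definition dim_lVC_rel :: "'a::group_add set \<Rightarrow> 'a set \<Rightarrow> enat" where
  "dim_lVC_rel A B = VC (FLc A B)"

definition dim_rVC_rel :: "'a::group_add set \<Rightarrow> 'a set \<Rightarrow> enat" where
  "dim_rVC_rel A B = VC (FRc A B)"

definition dim_lVC :: "'a::group_add set \<Rightarrow> enat" where
  "dim_lVC A = dim_lVC_rel A A"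

definition dim_rVC :: "'a::group_add set \<Rightarrow> enat" where
  "dim_rVC A = dim_rVC_rel A A"

end

theory Submission
  imports Defs
begin


lemma shatters_iff: "shatters F Y \<longleftrightarrow> (\<forall>Z. Z \<subseteq> Y \<longrightarrow> (\<exists>S\<in>F. Y \<inter> S = Z))"
  unfolding shatters_def
proof
  assume H: "{Y \<inter> S |S. S \<in> F} = Pow Y"
  show "\<forall>Z. Z \<subseteq> Y \<longrightarrow> (\<exists>S\<in>F. Y \<inter> S = Z)"
  proof (intro allI impI)
    fix Z assume "Z \<subseteq> Y"
    hence "Z \<in> {Y \<inter> S |S. S \<in> F}" unfolding H by simp
    thus "\<exists>S\<in>F. Y \<inter> S = Z" by auto
  qed
next
  assume H: "\<forall>Z. Z \<subseteq> Y \<longrightarrow> (\<exists>S\<in>F. Y \<inter> S = Z)"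
  show "{Y \<inter> S |S. S \<in> F} = Pow Y"
  proof (rule set_eqI)
    fix Z
    show "Z \<in> {Y \<inter> S |S. S \<in> F} \<longleftrightarrow> Z \<in> Pow Y" using H by auto
  qed
qed

lemma VC_ge: "finite Y \<Longrightarrow> shatters F Y \<Longrightarrow> enat (card Y) \<le> VC F"
  unfolding VC_def by (rule Sup_upper) auto

lemma VC_le: "(\<And>Y. finite Y \<Longrightarrow> shatters F Y \<Longrightarrow> card Y > 0 \<Longrightarrow> enat (card Y) \<le> X) \<Longrightarrow> VC F \<le> X"
  unfolding VC_def
proof (rule Sup_least)
  fix x assume "x \<in> {enat (card Y) |Y. finite Y \<and> shatters F Y}"
  then obtain Y where Y: "x = enat (card Y)" "finite Y" "shatters F Y" by blast
  assume H: "\<And>Y. finite Y \<Longrightarrow> shatters F Y \<Longrightarrow> card Y > 0 \<Longrightarrow> enat (card Y) \<le> X"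
  show "x \<le> X"
  proof (cases "card Y = 0")
    case True thus ?thesis using Y by (simp add: zero_enat_def[symmetric])
  next
    case False
    hence "card Y > 0" by simp
    from H[OF Y(2,3) this] Y(1) show ?thesis by simp
  qed
qed

lemma VC_witness:
  assumes "enat n \<le> VC F" "n > 0"
  shows "\<exists>Y. finite Y \<and> shatters F Y \<and> n \<le> card Y"
proof (rule ccontr)
  assume neg: "\<not> ?thesis"
  have "VC F \<le> enat (n - 1)"
  proof (intro VC_le)
    fix Y assume "finite Y" "shatters F Y"
    hence "\<not> n \<le> card Y" using neg by blast
    thus "enat (card Y) \<le> enat (n - 1)" by simp
  qed
  with assms(1) have "enat n \<le> enat (n - 1)" by (rule order_trans)
  with assms(2) show False by simp
qed

lemma VC_transfer:
  assumes "\<And>Y. finite Y \<Longrightarrow> shatters F Y \<Longrightarrow> card Y > 0 \<Longrightarrow>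
            \<exists>Y'. finite Y' \<and> shatters F' Y' \<and> card Y \<le> card Y'"
  shows "VC F \<le> VC F'"
proof (rule VC_le)
  fix Y assume "finite Y" "shatters F Y" "card Y > 0"
  from assms[OF this] obtain Y' where "finite Y'" "shatters F' Y'" "card Y \<le> card Y'" by blast
  then have "enat (card Y) \<le> enat (card Y')" by simp
  also have "\<dots> \<le> VC F'" using VC_ge[of Y' F'] \<open>finite Y'\<close> \<open>shatters F' Y'\<close> by blast
  finally show "enat (card Y) \<le> VC F'" .
qed

lemma VC_mono: assumes "F \<subseteq> F'" shows "VC F \<le> VC F'"
proof (rule VC_transfer)
  fix Y assume Y: "finite Y" "shatters F Y"
  have "shatters F' Y" unfolding shatters_iff
  proof (intro allI impI)
    fix Z assume "Z \<subseteq> Y"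
    then obtain S where "S \<in> F" "Y \<inter> S = Z" using Y(2) unfolding shatters_iff by auto
    thus "\<exists>S\<in>F'. Y \<inter> S = Z" using assms by auto
  qed
  with Y(1) show "\<exists>Y'. finite Y' \<and> shatters F' Y' \<and> card Y \<le> card Y'" by auto
qed

lemma key:
  fixes R :: "'p \<Rightarrow> 's \<Rightarrow> bool"
  assumes fin: "finite Y" and card: "2^k \<le> card Y"
    and sh: "\<forall>Z\<subseteq>Y. \<exists>s\<in>Ss. \<forall>y\<in>Y. R y s \<longleftrightarrow> y\<in>Z"
  shows "\<exists>T. T \<subseteq> Ss \<and> finite T \<and> card T = k \<and> (\<forall>W\<subseteq>T. \<exists>y\<in>Y. \<forall>t\<in>T. R y t \<longleftrightarrow> t \<in> W)"
proof -
  have "card (Pow {..<k}) \<le> card Y" using card by (simp add: card_Pow)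
  moreover have "finite (Pow {..<k::nat})" by simp
  ultimately obtain f where f: "f ` Pow {..<k} \<subseteq> Y" "inj_on f (Pow {..<k})"
    using card_le_inj[of "Pow {..<k}" Y] fin by blast
  have "\<forall>j. \<exists>s. s \<in> Ss \<and> (\<forall>y\<in>Y. R y s \<longleftrightarrow> y \<in> f ` {J\<in>Pow {..<k}. j \<in> J})"
  proof
    fix j
    have "f ` {J\<in>Pow {..<k}. j \<in> J} \<subseteq> Y" using f(1) by auto
    from sh[rule_format, OF this] show "\<exists>s. s \<in> Ss \<and> (\<forall>y\<in>Y. R y s \<longleftrightarrow> y \<in> f ` {J\<in>Pow {..<k}. j \<in> J})"
      unfolding Bex_def .
  qed
  then obtain s where s0: "\<forall>j. s j \<in> Ss \<and> (\<forall>y\<in>Y. R y (s j) \<longleftrightarrow> y \<in> f ` {J\<in>Pow {..<k}. j \<in> J})"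
    by (rule choice[THEN exE])
  have s: "\<And>j. s j \<in> Ss" "\<And>j y. y\<in>Y \<Longrightarrow> R y (s j) \<longleftrightarrow> y \<in> f ` {J\<in>Pow {..<k}. j\<in>J}"
    using s0 by auto
  have Rf: "R (f J) (s j) \<longleftrightarrow> j \<in> J" if "J \<subseteq> {..<k}" for J j
  proof -
    have "f J \<in> Y" using f(1) that by blast
    hence "R (f J) (s j) \<longleftrightarrow> f J \<in> f ` {J\<in>Pow {..<k}. j\<in>J}" by (rule s(2))
    also have "\<dots> \<longleftrightarrow> J \<in> {J\<in>Pow {..<k}. j\<in>J}"
      by (rule inj_on_image_mem_iff[OF f(2)]) (use that in auto)
    also have "\<dots> \<longleftrightarrow> j \<in> J" using that by simp
    finally show ?thesis .
  qed
  have inj: "inj_on s {..<k}"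
  proof (rule inj_onI)
    fix i j assume "i \<in> {..<k}" "j \<in> {..<k}" "s i = s j"
    have "R (f {i}) (s i)" using Rf[of "{i}" i] \<open>i \<in> {..<k}\<close> by simp
    hence "R (f {i}) (s j)" unfolding \<open>s i = s j\<close> .
    then show "i = j" using Rf[of "{i}" j] \<open>i \<in> {..<k}\<close> by simp
  qed
  show ?thesis
  proof (intro exI conjI allI impI)
    show "s ` {..<k} \<subseteq> Ss" using s(1) by blast
    show "finite (s ` {..<k})" by simp
    show "card (s ` {..<k}) = k" using inj by (simp add: card_image)
    fix W assume W: "W \<subseteq> s ` {..<k}"
    let ?J = "{j\<in>{..<k}. s j \<in> W}"
    have "?J \<in> Pow {..<k}" by auto
    hence "f ?J \<in> Y" using f(1) by (meson image_subset_iff)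
    moreover have "\<forall>t\<in>s ` {..<k}. R (f ?J) t \<longleftrightarrow> t \<in> W"
    proof
      fix t assume "t \<in> s ` {..<k}"
      then obtain j where j: "j < k" "t = s j" by auto
      have "R (f ?J) (s j) \<longleftrightarrow> j \<in> ?J" by (rule Rf) auto
      also have "\<dots> \<longleftrightarrow> s j \<in> W" using j(1) by simp
      finally show "R (f ?J) t \<longleftrightarrow> t \<in> W" unfolding j(2) .
    qed
    ultimately show "\<exists>y\<in>Y. \<forall>t\<in>s ` {..<k}. R y t \<longleftrightarrow> t \<in> W" by (rule bexI[rotated])
  qed
qed




lemma dual_bound1:
  assumes "VC F = enat d"
  shows "dualVC F < enat (2 * 2 ^ d)"
proof (rule ccontr)
  assume "\<not> ?thesis"
  hence "enat (2 * 2 ^ d) \<le> VC (dual_sys F)" by (simp add: dualVC_def not_less)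
  then obtain Y where Y: "finite Y" "shatters (dual_sys F) Y" "2 ^ Suc d \<le> card Y"
    using VC_witness[of "2 * 2 ^ d" "dual_sys F"] by auto
  have sh: "\<forall>W\<subseteq>Y. \<exists>x\<in>\<Union>F. Y \<inter> {S\<in>F. x \<in> S} = W"
  proof (intro allI impI)
    fix W assume "W \<subseteq> Y"
    then obtain T where "T \<in> dual_sys F" "Y \<inter> T = W" using Y(2) unfolding shatters_iff by meson
    then obtain x where "x \<in> \<Union>F" "T = {S\<in>F. x \<in> S}" unfolding dual_sys_def by auto
    thus "\<exists>x\<in>\<Union>F. Y \<inter> {S\<in>F. x \<in> S} = W" using \<open>Y \<inter> T = W\<close> by auto
  qed
  have "Y \<noteq> {}" using Y(3) by (metis card.empty le_zero_eq pos2 zero_less_power not_less)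
  have "Y \<subseteq> F"
  proof -
    obtain x where "Y \<inter> {S\<in>F. x \<in> S} = Y" using sh by blast
    thus ?thesis by blast
  qed
  have sh2: "\<forall>W\<subseteq>Y. \<exists>x\<in>\<Union>F. \<forall>S\<in>Y. x \<in> S \<longleftrightarrow> S \<in> W"
  proof (intro allI impI)
    fix W assume "W \<subseteq> Y"
    then obtain x where "x \<in> \<Union>F" "Y \<inter> {S\<in>F. x \<in> S} = W" using sh by blast
    hence "\<forall>S\<in>Y. x \<in> S \<longleftrightarrow> S \<in> W" using \<open>Y \<subseteq> F\<close> by auto
    thus "\<exists>x\<in>\<Union>F. \<forall>S\<in>Y. x \<in> S \<longleftrightarrow> S \<in> W" using \<open>x \<in> \<Union>F\<close> by (rule bexI)
  qed
  obtain T where T: "T \<subseteq> \<Union>F" "finite T" "card T = Suc d" "\<forall>W\<subseteq>T. \<exists>S\<in>Y. \<forall>t\<in>T. t \<in> S \<longleftrightarrow> t \<in> W"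
    using key[of Y "Suc d" "\<Union>F" "\<lambda>S x. x \<in> S", OF Y(1) Y(3) sh2] by (elim exE conjE)
  have "shatters F T" unfolding shatters_iff
  proof (intro allI impI)
    fix Z assume "Z \<subseteq> T"
    then obtain S where "S \<in> Y" "\<forall>t\<in>T. t \<in> S \<longleftrightarrow> t \<in> Z" using T(4) by meson
    hence "T \<inter> S = Z" using \<open>Z \<subseteq> T\<close> by auto
    thus "\<exists>S\<in>F. T \<inter> S = Z" using \<open>S \<in> Y\<close> \<open>Y \<subseteq> F\<close> by blast
  qed
  hence "enat (Suc d) \<le> VC F" using VC_ge[of T F] T by simp
  with assms show False by simp
qed

lemma dual_bound2:
  assumes "dualVC F = enat d"
  shows "VC F < enat (2 * 2 ^ d)"
proof (rule ccontr)
  assume "\<not> ?thesis"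
  hence "enat (2 * 2 ^ d) \<le> VC F" by (simp add: not_less)
  then obtain Y where Y: "finite Y" "shatters F Y" "2 ^ Suc d \<le> card Y"
    using VC_witness[of "2 * 2 ^ d" F] by auto
  have sh: "\<forall>Z\<subseteq>Y. \<exists>S\<in>F. \<forall>y\<in>Y. y \<in> S \<longleftrightarrow> y \<in> Z"
  proof (intro allI impI)
    fix Z assume "Z \<subseteq> Y"
    then obtain S where "S \<in> F" "Y \<inter> S = Z" using Y(2) unfolding shatters_iff by blast
    thus "\<exists>S\<in>F. \<forall>y\<in>Y. y \<in> S \<longleftrightarrow> y \<in> Z" by blast
  qed
  have "Y \<subseteq> \<Union>F"
  proof -
    obtain S where "S \<in> F" "Y \<inter> S = Y" using Y(2) unfolding shatters_iff by blast
    thus ?thesis by blast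
  qed
  obtain T where T: "T \<subseteq> F" "finite T" "card T = Suc d" "\<forall>W\<subseteq>T. \<exists>y\<in>Y. \<forall>t\<in>T. y \<in> t \<longleftrightarrow> t \<in> W"
    using key[of Y "Suc d" F "\<lambda>y S. y \<in> S", OF Y(1) Y(3) sh] by (elim exE conjE)
  have "shatters (dual_sys F) T" unfolding shatters_iff dual_sys_def
  proof (intro allI impI)
    fix W assume "W \<subseteq> T"
    then obtain y where "y \<in> Y" "\<forall>t\<in>T. y \<in> t \<longleftrightarrow> t \<in> W" using T(4) by blast
    moreover have "y \<in> \<Union>F" using \<open>y \<in> Y\<close> \<open>Y \<subseteq> \<Union>F\<close> by blast
    ultimately show "\<exists>S\<in>{{S \<in> F. x \<in> S} |x. x \<in> \<Union> F}. T \<inter> S = W"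
      using T(1) \<open>W \<subseteq> T\<close> by (intro bexI[of _ "{S \<in> F. y \<in> S}"]) auto
  qed
  hence "enat (Suc d) \<le> VC (dual_sys F)" using VC_ge[of T] T by simp
  with assms show False by (simp add: dualVC_def)
qed

lemma VC_image:
  assumes "inj g"
  shows "VC ((\<lambda>S. g ` S) ` F) = VC F"
proof (rule antisym)
  show "VC F \<le> VC ((\<lambda>S. g ` S) ` F)"
  proof (rule VC_transfer)
    fix Y assume Y: "finite Y" "shatters F Y"
    have "shatters ((\<lambda>S. g ` S) ` F) (g ` Y)" unfolding shatters_iff
    proof (intro allI impI)
      fix Z assume "Z \<subseteq> g ` Y"
      have "Y \<inter> g -` Z \<subseteq> Y" by blast
      from Y(2)[unfolded shatters_iff, rule_format, OF this]
      obtain S where "S \<in> F" "Y \<inter> S = Y \<inter> g -` Z" by blast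
      have "g ` Y \<inter> g ` S = g ` (Y \<inter> S)" by (rule image_Int[OF assms, symmetric])
      also have "\<dots> = g ` (Y \<inter> g -` Z)" using \<open>Y \<inter> S = Y \<inter> g -` Z\<close> by simp
      also have "\<dots> = Z" using \<open>Z \<subseteq> g ` Y\<close> by blast
      finally have "g ` Y \<inter> g ` S = Z" .
      thus "\<exists>S\<in>(\<lambda>S. g ` S) ` F. g ` Y \<inter> S = Z" using \<open>S \<in> F\<close> by blast
    qed
    thus "\<exists>Y'. finite Y' \<and> shatters ((\<lambda>S. g ` S) ` F) Y' \<and> card Y \<le> card Y'"
      using Y assms by (intro exI[of _ "g ` Y"]) (auto simp: card_image inj_on_subset)
  qed
  show "VC ((\<lambda>S. g ` S) ` F) \<le> VC F"
  proof (rule VC_transfer)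
    fix Y' assume Y': "finite Y'" "shatters ((\<lambda>S. g ` S) ` F) Y'" "card Y' > 0"
    have "Y' \<subseteq> range g"
    proof -
      obtain S where "S \<in> (\<lambda>S. g ` S) ` F" "Y' \<inter> S = Y'"
        using Y'(2)[unfolded shatters_iff, rule_format, of Y'] by blast
      thus ?thesis by blast
    qed
    hence im: "g ` (g -` Y') = Y'" by blast
    have fin: "finite (g -` Y')" using Y'(1) assms by (simp add: finite_vimageI)
    have "shatters F (g -` Y')" unfolding shatters_iff
    proof (intro allI impI)
      fix Z assume Z: "Z \<subseteq> g -` Y'"
      hence "g ` Z \<subseteq> Y'" by blast
      from Y'(2)[unfolded shatters_iff, rule_format, OF this]
      obtain S where "S \<in> F" "Y' \<inter> g ` S = g ` Z" by blast
      hence "g ` (g -` Y' \<inter> S) = g ` Z" using im assms by (simp add: image_Int)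
      hence "g -` Y' \<inter> S = Z" using assms by (simp add: inj_image_eq_iff)
      thus "\<exists>S\<in>F. g -` Y' \<inter> S = Z" using \<open>S \<in> F\<close> by blast
    qed
    moreover have "card Y' = card (g -` Y')" using im assms
      by (metis card_image inj_on_subset subset_UNIV)
    ultimately show "\<exists>Y. finite Y \<and> shatters F Y \<and> card Y' \<le> card Y" using fin by auto
  qed
qed

lemma dual_image:
  assumes "inj h"
  shows "dual_sys ((\<lambda>S. h ` S) ` F) = (\<lambda>T. (\<lambda>S. h ` S) ` T) ` dual_sys F"
proof -
  have hx: "h x \<in> h ` S \<longleftrightarrow> x \<in> S" for x S
    using assms by (simp add: inj_image_mem_iff)
  have e: "{S' \<in> (\<lambda>S. h ` S) ` F. h x \<in> S'} = (\<lambda>S. h ` S) ` {S\<in>F. x \<in> S}" for x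
  proof (rule set_eqI)
    fix S'
    show "S' \<in> {S' \<in> (\<lambda>S. h ` S) ` F. h x \<in> S'} \<longleftrightarrow> S' \<in> (\<lambda>S. h ` S) ` {S\<in>F. x \<in> S}"
    proof
      assume "S' \<in> {S' \<in> (\<lambda>S. h ` S) ` F. h x \<in> S'}"
      then obtain S where "S \<in> F" "S' = h ` S" "h x \<in> S'" by blast
      hence "S \<in> {S\<in>F. x \<in> S}" using hx by simp
      thus "S' \<in> (\<lambda>S. h ` S) ` {S\<in>F. x \<in> S}" using \<open>S' = h ` S\<close> by (rule rev_image_eqI)
    next
      assume "S' \<in> (\<lambda>S. h ` S) ` {S\<in>F. x \<in> S}"
      then obtain S where "S \<in> F" "S' = h ` S" "x \<in> S" by blast
      thus "S' \<in> {S' \<in> (\<lambda>S. h ` S) ` F. h x \<in> S'}" by blast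
    qed
  qed
  show ?thesis unfolding dual_sys_def
  proof (rule set_eqI)
    fix T
    show "T \<in> {{S' \<in> (\<lambda>S. h ` S) ` F. y \<in> S'} |y. y \<in> \<Union> ((\<lambda>S. h ` S) ` F)} \<longleftrightarrow>
          T \<in> (\<lambda>T. (\<lambda>S. h ` S) ` T) ` {{S \<in> F. x \<in> S} |x. x \<in> \<Union> F}"
    proof
      assume "T \<in> {{S' \<in> (\<lambda>S. h ` S) ` F. y \<in> S'} |y. y \<in> \<Union> ((\<lambda>S. h ` S) ` F)}"
      then obtain y where y: "T = {S' \<in> (\<lambda>S. h ` S) ` F. y \<in> S'}" "y \<in> \<Union> ((\<lambda>S. h ` S) ` F)" by blast
      then obtain x S0 where "S0 \<in> F" "x \<in> S0" "y = h x" by blast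
      hence "T = (\<lambda>S. h ` S) ` {S\<in>F. x \<in> S}" using y(1) e by simp
      moreover have "{S\<in>F. x \<in> S} \<in> {{S \<in> F. x \<in> S} |x. x \<in> \<Union> F}" using \<open>S0 \<in> F\<close> \<open>x \<in> S0\<close> by blast
      ultimately show "T \<in> (\<lambda>T. (\<lambda>S. h ` S) ` T) ` {{S \<in> F. x \<in> S} |x. x \<in> \<Union> F}" by (rule image_eqI)
    next
      assume "T \<in> (\<lambda>T. (\<lambda>S. h ` S) ` T) ` {{S \<in> F. x \<in> S} |x. x \<in> \<Union> F}"
      then obtain x S0 where x: "T = (\<lambda>S. h ` S) ` {S\<in>F. x \<in> S}" "S0 \<in> F" "x \<in> S0" by blast
      hence "T = {S' \<in> (\<lambda>S. h ` S) ` F. h x \<in> S'}" using e by simp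
      moreover have "h x \<in> \<Union> ((\<lambda>S. h ` S) ` F)" using x by blast
      ultimately show "T \<in> {{S' \<in> (\<lambda>S. h ` S) ` F. y \<in> S'} |y. y \<in> \<Union> ((\<lambda>S. h ` S) ` F)}" by blast
    qed
  qed
qed

lemma dualVC_image:
  assumes "inj h"
  shows "dualVC ((\<lambda>S. h ` S) ` F) = dualVC F"
proof -
  have "inj (\<lambda>S. h ` S)" using assms by (simp add: inj_def inj_image_eq_iff)
  thus ?thesis unfolding dualVC_def using assms by (simp add: dual_image VC_image)
qed




lemma mem_iff:
  fixes A :: "'a::group_add set"
  shows "w \<in> (\<lambda>a. a + g) ` A \<longleftrightarrow> -g \<in> (\<lambda>a. -w + a) ` A"
proof
  assume "w \<in> (\<lambda>a. a + g) ` A"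
  then obtain a where a: "a \<in> A" "w = a + g" by blast
  have "-g = -w + a" using a(2) by (simp add: minus_add add.assoc)
  thus "-g \<in> (\<lambda>a. -w + a) ` A" using a(1) by blast
next
  assume "-g \<in> (\<lambda>a. -w + a) ` A"
  then obtain a where a: "a \<in> A" "-g = -w + a" by blast
  have "w = a + g"
  proof -
    have "a = w + - g" using a(2) by (simp add: add.assoc)
    thus ?thesis by (simp add: add.assoc)
  qed
  thus "w \<in> (\<lambda>a. a + g) ` A" using a(1) by blast
qed

lemma mem_iff2:
  fixes A :: "'a::group_add set"
  shows "-x \<in> (\<lambda>a. a + - y) ` A \<longleftrightarrow> y \<in> (\<lambda>a. x + a) ` A"
  using mem_iff[of "-x" "-y" A] by simp

lemma partA: "VCl B A \<le> VCl UNIV A"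
  unfolding VCl_def FL_def by (rule VC_mono) blast

lemma partB1:
  fixes A :: "'a::group_add set"
  shows "dim_lVC A \<le> VCl UNIV A"
  unfolding dim_lVC_def dim_lVC_rel_def VCl_def
proof (rule VC_transfer)
  fix Y assume Y: "finite Y" "shatters (FLc A A) Y" "card Y > 0"
  have "Y \<subseteq> A"
  proof -
    obtain S where "S \<in> FLc A A" "Y \<inter> S = Y" using Y(2)[unfolded shatters_iff, rule_format, of Y] by blast
    moreover have "S \<subseteq> A" using \<open>S \<in> FLc A A\<close> unfolding FLc_def by auto
    ultimately show ?thesis by blast
  qed
  have "shatters (FL UNIV A) Y" unfolding shatters_iff
  proof (intro allI impI)
    fix Z assume "Z \<subseteq> Y"
    from Y(2)[unfolded shatters_iff, rule_format, OF this]
    obtain S where "S \<in> FLc A A" "Y \<inter> S = Z" by blast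
    then obtain x where x: "S = (\<lambda>a. x + a) ` A \<inter> A" unfolding FLc_def by blast
    have "(\<lambda>a. x + a) ` A \<in> FL UNIV A" unfolding FL_def by blast
    moreover have "Y \<inter> (\<lambda>a. x + a) ` A = Z" using \<open>Y \<inter> S = Z\<close> \<open>Y \<subseteq> A\<close> x by blast
    ultimately show "\<exists>S\<in>FL UNIV A. Y \<inter> S = Z" by blast
  qed
  thus "\<exists>Y'. finite Y' \<and> shatters (FL UNIV A) Y' \<and> card Y \<le> card Y'" using Y(1) by blast
qed

lemma enat_minus_one_le: "(a::enat) \<le> b + 1 \<Longrightarrow> a - 1 \<le> b"
  by (cases a; cases b) (auto simp: one_enat_def)

lemma partB2:
  fixes A :: "'a::group_add set"
  shows "VCl UNIV A - 1 \<le> dim_lVC A"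
proof (rule enat_minus_one_le)
  show "VCl UNIV A \<le> dim_lVC A + 1"
    unfolding VCl_def
  proof (rule VC_le)
    fix Y assume Y: "finite Y" "shatters (FL UNIV A) Y" "card Y > 0"
    then obtain y0 where y0: "y0 \<in> Y" by (metis card.empty ex_in_conv less_irrefl)
    obtain g where g: "Y \<subseteq> (\<lambda>a. g + a) ` A"
    proof -
      obtain S where "S \<in> FL UNIV A" "Y \<inter> S = Y" using Y(2)[unfolded shatters_iff, rule_format, of Y] by blast
      then obtain g where "S = (\<lambda>a. g + a) ` A" unfolding FL_def by blast
      thus ?thesis using that \<open>Y \<inter> S = Y\<close> by blast
    qed
    define Y' where "Y' = (\<lambda>y. -g + y) ` (Y - {y0})"
    have inj: "inj_on (\<lambda>y. -g + y) U" for U by (rule inj_onI) simp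
    have cardY': "card Y' = card Y - 1" unfolding Y'_def
      using Y(1) y0 by (simp add: card_image[OF inj])
    have finY': "finite Y'" unfolding Y'_def using Y(1) by simp
    have memY': "-g + y \<in> A" if yY: "y \<in> Y" for y
    proof -
      obtain a where "a \<in> A" "y = g + a" using g yY by blast
      thus ?thesis by (simp add: add.assoc[symmetric])
    qed
    have "shatters (FLc A A) Y'" unfolding shatters_iff
    proof (intro allI impI)
      fix Z' assume Z': "Z' \<subseteq> Y'"
      define Z where "Z = (\<lambda>z. g + z) ` Z' \<union> {y0}"
      have "Z \<subseteq> Y"
      proof
        fix z assume "z \<in> Z"
        then consider "z = y0" | z' where "z' \<in> Z'" "z = g + z'" unfolding Z_def by blast
        thus "z \<in> Y"
        proof cases
          case 1 thus ?thesis using y0 by simp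
        next
          case 2
          then obtain y where "y \<in> Y" "z' = -g + y" using Z' unfolding Y'_def by blast
          thus ?thesis using 2 by (simp add: add.assoc[symmetric])
        qed
      qed
      from Y(2)[unfolded shatters_iff, rule_format, OF this]
      obtain S where "S \<in> FL UNIV A" "Y \<inter> S = Z" by blast
      then obtain x where x: "S = (\<lambda>a. x + a) ` A" unfolding FL_def by blast
      define x' where "x' = -g + x"
      have "y0 \<in> S" using \<open>Y \<inter> S = Z\<close> unfolding Z_def by blast
      then obtain a1 where a1: "a1 \<in> A" "y0 = x + a1" using x by blast
      obtain a2 where a2: "a2 \<in> A" "y0 = g + a2" using g y0 by blast
      have "x' = a2 + - a1"
      proof -
        have "x = y0 + - a1" using a1(2) by (simp add: add.assoc)
        hence "x' = -g + ((g + a2) + -a1)" unfolding x'_def using a2(2) by simp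
        also have "\<dots> = a2 + -a1" by (simp only: add.assoc minus_add_cancel)
        finally show ?thesis .
      qed
      hence x'mem: "x' \<in> setprod A (setinv A)" unfolding setprod_def setinv_def using a1(1) a2(1) by blast
      have shift: "-g + y \<in> (\<lambda>a. x' + a) ` A \<longleftrightarrow> y \<in> S" for y
      proof
        assume "-g + y \<in> (\<lambda>a. x' + a) ` A"
        then obtain a where "a \<in> A" "-g + y = x' + a" by blast
        hence "y = x + a" unfolding x'_def
          by (metis add.assoc add_minus_cancel)
        thus "y \<in> S" using x \<open>a \<in> A\<close> by blast
      next
        assume "y \<in> S"
        then obtain a where "a \<in> A" "y = x + a" using x by blast
        hence "-g + y = x' + a" unfolding x'_def by (simp add: add.assoc)
        thus "-g + y \<in> (\<lambda>a. x' + a) ` A" using \<open>a \<in> A\<close> by blast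
      qed
      have "Y' \<inter> ((\<lambda>a. x' + a) ` A \<inter> A) = Z'"
      proof (rule set_eqI)
        fix u
        show "u \<in> Y' \<inter> ((\<lambda>a. x' + a) ` A \<inter> A) \<longleftrightarrow> u \<in> Z'"
        proof
          assume u: "u \<in> Y' \<inter> ((\<lambda>a. x' + a) ` A \<inter> A)"
          then obtain y where y: "y \<in> Y" "y \<noteq> y0" "u = -g + y" unfolding Y'_def by blast
          hence "y \<in> S" using shift u by blast
          hence "y \<in> Z" using \<open>Y \<inter> S = Z\<close> y(1) by blast
          then obtain z' where "z' \<in> Z'" "y = g + z'" using y(2) unfolding Z_def by blast
          thus "u \<in> Z'" using y(3) by (simp add: add.assoc[symmetric])
        next
          assume u: "u \<in> Z'"
          hence "u \<in> Y'" using Z' by blast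
          then obtain y where y: "y \<in> Y" "y \<noteq> y0" "u = -g + y" unfolding Y'_def by blast
          have "y = g + u" using y(3) by (simp add: add.assoc[symmetric])
          hence "y \<in> Z" unfolding Z_def using u by blast
          hence "y \<in> S" using \<open>Y \<inter> S = Z\<close> by blast
          hence "u \<in> (\<lambda>a. x' + a) ` A" using shift y(3) by blast
          moreover have "u \<in> A" using memY' y(1,3) by blast
          ultimately show "u \<in> Y' \<inter> ((\<lambda>a. x' + a) ` A \<inter> A)" using \<open>u \<in> Y'\<close> by blast
        qed
      qed
      moreover have "(\<lambda>a. x' + a) ` A \<inter> A \<in> FLc A A" unfolding FLc_def using x'mem by blast
      ultimately show "\<exists>S\<in>FLc A A. Y' \<inter> S = Z'" by blast
    qed
    hence "enat (card Y') \<le> dim_lVC A"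
      unfolding dim_lVC_def dim_lVC_rel_def using VC_ge finY' by blast
    hence "enat (card Y') + 1 \<le> dim_lVC A + 1" by (simp add: add_right_mono)
    moreover have "enat (card Y) = enat (card Y') + 1" using cardY' Y(3) by (simp add: one_enat_def)
    ultimately show "enat (card Y) \<le> dim_lVC A + 1" by simp
  qed
qed




lemma dual_sub:
  assumes "shatters (dual_sys F) Y" "Y \<noteq> {}"
  shows "Y \<subseteq> F"
proof -
  obtain T where "T \<in> dual_sys F" "Y \<inter> T = Y" using assms(1)[unfolded shatters_iff, rule_format, of Y] by blast
  moreover have "T \<subseteq> F" using \<open>T \<in> dual_sys F\<close> unfolding dual_sys_def by blast
  ultimately show ?thesis by blast
qed

lemma dual_get:
  assumes "shatters (dual_sys F) Y" "W \<subseteq> Y"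
  obtains x where "x \<in> \<Union>F" "Y \<inter> {S\<in>F. x \<in> S} = W"
proof -
  obtain T where "T \<in> dual_sys F" "Y \<inter> T = W" using assms(1)[unfolded shatters_iff, rule_format, OF assms(2)] by blast
  then obtain x where "x \<in> \<Union>F" "T = {S\<in>F. x \<in> S}" unfolding dual_sys_def by blast
  thus ?thesis using that \<open>Y \<inter> T = W\<close> by blast
qed

lemma dual_put:
  assumes "x \<in> \<Union>F" "Y \<inter> {S\<in>F. x \<in> S} = W"
  shows "\<exists>T\<in>dual_sys F. Y \<inter> T = W"
  using assms unfolding dual_sys_def by blast

lemma partC:
  fixes A :: "'a::group_add set"
  shows "VCl UNIV A = dualVC (FR UNIV A)"
  unfolding VCl_def dualVC_def
proof (rule antisym)
  define \<phi> where "\<phi> y = (\<lambda>a. a + - y) ` A" for y :: 'a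
  have mem: "-x \<in> \<phi> y \<longleftrightarrow> y \<in> (\<lambda>a. x + a) ` A" for x y unfolding \<phi>_def by (rule mem_iff2)
  have \<phi>F: "\<phi> y \<in> FR UNIV A" for y unfolding \<phi>_def FR_def by blast
  show "VC (FL UNIV A) \<le> VC (dual_sys (FR UNIV A))"
  proof (rule VC_transfer)
    fix Y assume Y: "finite Y" "shatters (FL UNIV A) Y" "card Y > 0"
    have get: "\<exists>x. Y \<inter> (\<lambda>a. x + a) ` A = Z" if ZY: "Z \<subseteq> Y" for Z
    proof -
      obtain S where "S \<in> FL UNIV A" "Y \<inter> S = Z" using Y(2)[unfolded shatters_iff, rule_format, OF ZY] by blast
      thus ?thesis unfolding FL_def by blast
    qed
    obtain y0 where y0: "y0 \<in> Y" using Y(3) by (metis card.empty ex_in_conv less_irrefl)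
    have "A \<noteq> {}" using get[of Y] y0 by blast
    then obtain a0 where a0: "a0 \<in> A" by blast
    have inj: "inj_on \<phi> Y"
    proof (rule inj_onI)
      fix y1 y2 assume y: "y1 \<in> Y" "y2 \<in> Y" "\<phi> y1 = \<phi> y2"
      obtain x where x: "Y \<inter> (\<lambda>a. x + a) ` A = {y1}" using get[of "{y1}"] y(1) by blast
      hence "y1 \<in> (\<lambda>a. x + a) ` A" by blast
      hence "-x \<in> \<phi> y2" using mem y(3) by metis
      hence "y2 \<in> (\<lambda>a. x + a) ` A" using mem by blast
      hence "y2 \<in> Y \<inter> (\<lambda>a. x + a) ` A" using y(2) by (rule IntI[rotated])
      hence "y2 \<in> {y1}" by (simp only: x)
      thus "y1 = y2" by simp
    qed
    have "shatters (dual_sys (FR UNIV A)) (\<phi> ` Y)" unfolding shatters_iff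
    proof (intro allI impI)
      fix W assume W: "W \<subseteq> \<phi> ` Y"
      obtain x where x: "Y \<inter> (\<lambda>a. x + a) ` A = {y\<in>Y. \<phi> y \<in> W}" using get[of "{y\<in>Y. \<phi> y \<in> W}"] by blast
      have "-x \<in> \<Union>(FR UNIV A)"
      proof -
        have "-x = a0 + (-a0 + -x)" by (simp only: add_minus_cancel)
        hence "-x \<in> (\<lambda>a. a + (-a0 + -x)) ` A" using a0 by blast
        thus ?thesis unfolding FR_def by blast
      qed
      moreover have "\<phi> ` Y \<inter> {S\<in>FR UNIV A. -x \<in> S} = W"
      proof (rule set_eqI)
        fix S show "S \<in> \<phi> ` Y \<inter> {S\<in>FR UNIV A. -x \<in> S} \<longleftrightarrow> S \<in> W"
        proof
          assume "S \<in> \<phi> ` Y \<inter> {S\<in>FR UNIV A. -x \<in> S}"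
          then obtain y where "y \<in> Y" "S = \<phi> y" "-x \<in> \<phi> y" by blast
          hence "y \<in> Y \<inter> (\<lambda>a. x + a) ` A" using mem by blast
          thus "S \<in> W" using x \<open>S = \<phi> y\<close> by blast
        next
          assume "S \<in> W"
          then obtain y where "y \<in> Y" "S = \<phi> y" using W by blast
          hence "y \<in> Y \<inter> (\<lambda>a. x + a) ` A" using x \<open>S \<in> W\<close> by blast
          hence "-x \<in> \<phi> y" using mem by blast
          thus "S \<in> \<phi> ` Y \<inter> {S\<in>FR UNIV A. -x \<in> S}" using \<open>y \<in> Y\<close> \<open>S = \<phi> y\<close> \<phi>F by blast
        qed
      qed
      ultimately show "\<exists>T\<in>dual_sys (FR UNIV A). \<phi> ` Y \<inter> T = W" by (rule dual_put)
    qed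
    thus "\<exists>Y'. finite Y' \<and> shatters (dual_sys (FR UNIV A)) Y' \<and> card Y \<le> card Y'"
      using Y(1) inj by (intro exI[of _ "\<phi> ` Y"]) (simp add: card_image)
  qed
next
  show "VC (dual_sys (FR UNIV A)) \<le> VC (FL UNIV A)"
  proof (rule VC_transfer)
    fix Y assume Y: "finite Y" "shatters (dual_sys (FR UNIV A)) Y" "card Y > 0"
    have "Y \<noteq> {}" using Y(3) by auto
    hence YF: "Y \<subseteq> FR UNIV A" using Y(2) dual_sub by blast
    have "\<forall>S\<in>Y. \<exists>g. S = (\<lambda>a. a + g) ` A" using YF unfolding FR_def by blast
    then obtain \<gamma> where \<gamma>: "\<And>S. S \<in> Y \<Longrightarrow> S = (\<lambda>a. a + \<gamma> S) ` A" by metis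
    have inj: "inj_on (\<lambda>S. - \<gamma> S) Y"
    proof (rule inj_onI)
      fix S1 S2 assume "S1 \<in> Y" "S2 \<in> Y" "- \<gamma> S1 = - \<gamma> S2"
      thus "S1 = S2" using \<gamma>[of S1] \<gamma>[of S2] by simp
    qed
    have "shatters (FL UNIV A) ((\<lambda>S. - \<gamma> S) ` Y)" unfolding shatters_iff
    proof (intro allI impI)
      fix Z assume Z: "Z \<subseteq> (\<lambda>S. - \<gamma> S) ` Y"
      have "{S\<in>Y. - \<gamma> S \<in> Z} \<subseteq> Y" by blast
      from dual_get[OF Y(2) this] obtain x where x: "x \<in> \<Union>(FR UNIV A)"
        "Y \<inter> {S\<in>FR UNIV A. x \<in> S} = {S\<in>Y. - \<gamma> S \<in> Z}" by blast
      have key: "- \<gamma> S \<in> (\<lambda>a. -x + a) ` A \<longleftrightarrow> - \<gamma> S \<in> Z" if "S \<in> Y" for S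
      proof -
        have "- \<gamma> S \<in> (\<lambda>a. -x + a) ` A \<longleftrightarrow> x \<in> S" using mem_iff[of x "\<gamma> S" A] \<gamma>[OF that] by simp
        also have "\<dots> \<longleftrightarrow> S \<in> Y \<inter> {S\<in>FR UNIV A. x \<in> S}" using that YF by blast
        also have "\<dots> \<longleftrightarrow> - \<gamma> S \<in> Z" using x(2) that by blast
        finally show ?thesis .
      qed
      have "(\<lambda>S. - \<gamma> S) ` Y \<inter> (\<lambda>a. -x + a) ` A = Z"
        using key Z by blast
      moreover have "(\<lambda>a. -x + a) ` A \<in> FL UNIV A" unfolding FL_def by blast
      ultimately show "\<exists>S\<in>FL UNIV A. (\<lambda>S. - \<gamma> S) ` Y \<inter> S = Z" by blast
    qed
    thus "\<exists>Y'. finite Y' \<and> shatters (FL UNIV A) Y' \<and> card Y \<le> card Y'"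
      using Y(1) inj by (intro exI[of _ "(\<lambda>S. - \<gamma> S) ` Y"]) (simp add: card_image)
  qed
qed




lemma partD:
  fixes A :: "'a::group_add set"
  shows "dim_lVC A = dualVC (FR (setinv A) A)"
  unfolding dim_lVC_def dim_lVC_rel_def dualVC_def
proof (rule antisym)
  define \<phi> where "\<phi> y = (\<lambda>a. a + - y) ` A" for y :: 'a
  have mem: "-x \<in> \<phi> y \<longleftrightarrow> y \<in> (\<lambda>a. x + a) ` A" for x y unfolding \<phi>_def by (rule mem_iff2)
  have \<phi>F: "\<phi> y \<in> FR (setinv A) A" if "y \<in> A" for y unfolding \<phi>_def FR_def setinv_def using that by blast
  show "VC (FLc A A) \<le> VC (dual_sys (FR (setinv A) A))"
  proof (rule VC_transfer)
    fix Y assume Y: "finite Y" "shatters (FLc A A) Y" "card Y > 0"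
    have get: "\<exists>x. x \<in> setprod A (setinv A) \<and> Y \<inter> ((\<lambda>a. x + a) ` A \<inter> A) = Z" if ZY: "Z \<subseteq> Y" for Z
    proof -
      obtain S where "S \<in> FLc A A" "Y \<inter> S = Z" using Y(2)[unfolded shatters_iff, rule_format, OF ZY] by blast
      thus ?thesis unfolding FLc_def by blast
    qed
    have YA: "Y \<subseteq> A" using get[of Y] by blast
    have get2: "\<exists>x. x \<in> setprod A (setinv A) \<and> (\<forall>y\<in>Y. y \<in> (\<lambda>a. x + a) ` A \<longleftrightarrow> y \<in> Z)" if ZY: "Z \<subseteq> Y" for Z
    proof -
      obtain x where "x \<in> setprod A (setinv A)" "Y \<inter> ((\<lambda>a. x + a) ` A \<inter> A) = Z" using get[OF ZY] by blast
      moreover have "\<forall>y\<in>Y. y \<in> (\<lambda>a. x + a) ` A \<longleftrightarrow> y \<in> Y \<inter> ((\<lambda>a. x + a) ` A \<inter> A)" using YA by blast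
      ultimately show ?thesis by auto
    qed
    have inj: "inj_on \<phi> Y"
    proof (rule inj_onI)
      fix y1 y2 assume y: "y1 \<in> Y" "y2 \<in> Y" "\<phi> y1 = \<phi> y2"
      obtain x where x: "\<forall>y\<in>Y. y \<in> (\<lambda>a. x + a) ` A \<longleftrightarrow> y \<in> {y1}" using get2[of "{y1}"] y(1) by blast
      hence "y1 \<in> (\<lambda>a. x + a) ` A" using y(1) by blast
      hence "-x \<in> \<phi> y2" using mem y(3) by metis
      hence "y2 \<in> (\<lambda>a. x + a) ` A" using mem by blast
      hence "y2 \<in> {y1}" using x y(2) by blast
      thus "y1 = y2" by simp
    qed
    have "shatters (dual_sys (FR (setinv A) A)) (\<phi> ` Y)" unfolding shatters_iff
    proof (intro allI impI)
      fix W assume W: "W \<subseteq> \<phi> ` Y"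
      obtain x where x: "x \<in> setprod A (setinv A)" "\<forall>y\<in>Y. y \<in> (\<lambda>a. x + a) ` A \<longleftrightarrow> y \<in> {y\<in>Y. \<phi> y \<in> W}"
        using get2[of "{y\<in>Y. \<phi> y \<in> W}"] by blast
      have "-x \<in> \<Union>(FR (setinv A) A)"
      proof -
        obtain a b where ab: "a \<in> A" "b \<in> A" "x = a + - b" using x(1) unfolding setprod_def setinv_def by blast
        have "-x = b + - a" using ab(3) by (simp add: minus_add)
        hence "-x \<in> \<phi> a" unfolding \<phi>_def using ab(2) by blast
        thus ?thesis using \<phi>F[OF ab(1)] by blast
      qed
      moreover have "\<phi> ` Y \<inter> {S\<in>FR (setinv A) A. -x \<in> S} = W"
      proof (rule set_eqI)
        fix S show "S \<in> \<phi> ` Y \<inter> {S\<in>FR (setinv A) A. -x \<in> S} \<longleftrightarrow> S \<in> W"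
        proof
          assume "S \<in> \<phi> ` Y \<inter> {S\<in>FR (setinv A) A. -x \<in> S}"
          then obtain y where "y \<in> Y" "S = \<phi> y" "-x \<in> \<phi> y" by blast
          hence "y \<in> (\<lambda>a. x + a) ` A" using mem by blast
          thus "S \<in> W" using x(2) \<open>y \<in> Y\<close> \<open>S = \<phi> y\<close> by blast
        next
          assume "S \<in> W"
          then obtain y where "y \<in> Y" "S = \<phi> y" using W by blast
          hence "y \<in> (\<lambda>a. x + a) ` A" using x(2) \<open>S \<in> W\<close> by blast
          hence "-x \<in> \<phi> y" using mem by blast
          moreover have "\<phi> y \<in> FR (setinv A) A" using \<phi>F YA \<open>y \<in> Y\<close> by blast
          ultimately show "S \<in> \<phi> ` Y \<inter> {S\<in>FR (setinv A) A. -x \<in> S}" using \<open>y \<in> Y\<close> \<open>S = \<phi> y\<close> by blast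
        qed
      qed
      ultimately show "\<exists>T\<in>dual_sys (FR (setinv A) A). \<phi> ` Y \<inter> T = W" by (rule dual_put)
    qed
    thus "\<exists>Y'. finite Y' \<and> shatters (dual_sys (FR (setinv A) A)) Y' \<and> card Y \<le> card Y'"
      using Y(1) inj by (intro exI[of _ "\<phi> ` Y"]) (simp add: card_image)
  qed
next
  show "VC (dual_sys (FR (setinv A) A)) \<le> VC (FLc A A)"
  proof (rule VC_transfer)
    fix Y assume Y: "finite Y" "shatters (dual_sys (FR (setinv A) A)) Y" "card Y > 0"
    have "Y \<noteq> {}" using Y(3) by auto
    hence YF: "Y \<subseteq> FR (setinv A) A" using Y(2) dual_sub by blast
    have "\<forall>S\<in>Y. \<exists>b. b \<in> A \<and> S = (\<lambda>a. a + - b) ` A" using YF unfolding FR_def setinv_def by blast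
    then obtain \<beta> where \<beta>: "\<And>S. S \<in> Y \<Longrightarrow> \<beta> S \<in> A" "\<And>S. S \<in> Y \<Longrightarrow> S = (\<lambda>a. a + - \<beta> S) ` A" by metis
    have inj: "inj_on \<beta> Y"
    proof (rule inj_onI)
      fix S1 S2 assume "S1 \<in> Y" "S2 \<in> Y" "\<beta> S1 = \<beta> S2"
      thus "S1 = S2" using \<beta>(2)[of S1] \<beta>(2)[of S2] by simp
    qed
    have "shatters (FLc A A) (\<beta> ` Y)" unfolding shatters_iff
    proof (intro allI impI)
      fix Z assume Z: "Z \<subseteq> \<beta> ` Y"
      have "{S\<in>Y. \<beta> S \<in> Z} \<subseteq> Y" by blast
      from dual_get[OF Y(2) this] obtain x where x: "x \<in> \<Union>(FR (setinv A) A)"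
        "Y \<inter> {S\<in>FR (setinv A) A. x \<in> S} = {S\<in>Y. \<beta> S \<in> Z}" by blast
      have key: "\<beta> S \<in> (\<lambda>a. -x + a) ` A \<longleftrightarrow> \<beta> S \<in> Z" if SY: "S \<in> Y" for S
      proof -
        have "\<beta> S \<in> (\<lambda>a. -x + a) ` A \<longleftrightarrow> x \<in> S" using mem_iff2[of "-x" "\<beta> S" A] \<beta>(2)[OF SY] by simp
        also have "\<dots> \<longleftrightarrow> S \<in> Y \<inter> {S\<in>FR (setinv A) A. x \<in> S}" using SY YF by blast
        also have "\<dots> \<longleftrightarrow> \<beta> S \<in> Z" using x(2) SY by blast
        finally show ?thesis .
      qed
      have "-x \<in> setprod A (setinv A)"
      proof -
        obtain b e where be: "b \<in> A" "e \<in> A" "x = b + - e" using x(1) unfolding FR_def setinv_def by blast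
        have "-x = e + - b" using be(3) by (simp add: minus_add)
        thus ?thesis unfolding setprod_def setinv_def using be(1,2) by blast
      qed
      moreover have "\<beta> ` Y \<inter> ((\<lambda>a. -x + a) ` A \<inter> A) = Z"
        using key Z \<beta>(1) by blast
      ultimately show "\<exists>S\<in>FLc A A. \<beta> ` Y \<inter> S = Z" unfolding FLc_def by blast
    qed
    thus "\<exists>Y'. finite Y' \<and> shatters (FLc A A) Y' \<and> card Y \<le> card Y'"
      using Y(1) inj by (intro exI[of _ "\<beta> ` Y"]) (simp add: card_image)
  qed
qed




lemma hR:
  fixes A :: "'a::group_add set"
  shows "uminus ` ((\<lambda>c. y + c) ` (uminus ` A)) = (\<lambda>a. a + - y) ` A"
  by (simp add: image_image minus_add)

lemma hL:
  fixes A :: "'a::group_add set"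
  shows "uminus ` ((\<lambda>c. c + y) ` (uminus ` A)) = (\<lambda>a. - y + a) ` A"
  by (simp add: image_image minus_add)

lemma negFR:
  fixes A :: "'a::group_add set"
  shows "FR B A = (\<lambda>S. uminus ` S) ` FL (uminus ` B) (uminus ` A)"
proof (rule set_eqI)
  fix S
  show "S \<in> FR B A \<longleftrightarrow> S \<in> (\<lambda>S. uminus ` S) ` FL (uminus ` B) (uminus ` A)"
  proof
    assume "S \<in> FR B A"
    then obtain x where x: "x \<in> B" "S = (\<lambda>a. a + x) ` A" unfolding FR_def by blast
    have "S = uminus ` ((\<lambda>c. (-x) + c) ` (uminus ` A))" using x(2) hR[of "-x" A] by simp
    moreover have "(\<lambda>c. (-x) + c) ` (uminus ` A) \<in> FL (uminus ` B) (uminus ` A)" unfolding FL_def using x(1) by blast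
    ultimately show "S \<in> (\<lambda>S. uminus ` S) ` FL (uminus ` B) (uminus ` A)" by blast
  next
    assume "S \<in> (\<lambda>S. uminus ` S) ` FL (uminus ` B) (uminus ` A)"
    then obtain x where x: "x \<in> B" "S = uminus ` ((\<lambda>c. (-x) + c) ` (uminus ` A))" unfolding FL_def by blast
    hence "S = (\<lambda>a. a + x) ` A" using hR[of "-x" A] by simp
    thus "S \<in> FR B A" unfolding FR_def using x(1) by blast
  qed
qed

lemma negFL:
  fixes A :: "'a::group_add set"
  shows "FL B A = (\<lambda>S. uminus ` S) ` FR (uminus ` B) (uminus ` A)"
proof (rule set_eqI)
  fix S
  show "S \<in> FL B A \<longleftrightarrow> S \<in> (\<lambda>S. uminus ` S) ` FR (uminus ` B) (uminus ` A)"
  proof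
    assume "S \<in> FL B A"
    then obtain x where x: "x \<in> B" "S = (\<lambda>a. x + a) ` A" unfolding FL_def by blast
    have "S = uminus ` ((\<lambda>c. c + (-x)) ` (uminus ` A))" using x(2) hL[of "-x" A] by simp
    moreover have "(\<lambda>c. c + (-x)) ` (uminus ` A) \<in> FR (uminus ` B) (uminus ` A)" unfolding FR_def using x(1) by blast
    ultimately show "S \<in> (\<lambda>S. uminus ` S) ` FR (uminus ` B) (uminus ` A)" by blast
  next
    assume "S \<in> (\<lambda>S. uminus ` S) ` FR (uminus ` B) (uminus ` A)"
    then obtain x where x: "x \<in> B" "S = uminus ` ((\<lambda>c. c + (-x)) ` (uminus ` A))" unfolding FR_def by blast
    hence "S = (\<lambda>a. x + a) ` A" using hL[of "-x" A] by simp
    thus "S \<in> FL B A" unfolding FL_def using x(1) by blast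
  qed
qed

lemma negFRc:
  fixes A :: "'a::group_add set"
  shows "FRc A A = (\<lambda>S. uminus ` S) ` FLc (uminus ` A) (uminus ` A)"
proof -
  have e: "uminus ` ((\<lambda>c. y + c) ` (uminus ` A) \<inter> uminus ` A) = (\<lambda>a. a + - y) ` A \<inter> A" for y
    by (simp add: image_Int[OF inj_uminus] hR image_image)
  have m: "x \<in> setprod (setinv A) A \<longleftrightarrow> -x \<in> setprod (uminus ` A) (setinv (uminus ` A))" for x
  proof
    assume "x \<in> setprod (setinv A) A"
    then obtain a b where "a \<in> A" "b \<in> A" "x = -a + b" unfolding setprod_def setinv_def by blast
    hence "-x = -b + - (-a)" by (simp add: minus_add)
    thus "-x \<in> setprod (uminus ` A) (setinv (uminus ` A))" unfolding setprod_def setinv_def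
      using \<open>a \<in> A\<close> \<open>b \<in> A\<close> by blast
  next
    assume "-x \<in> setprod (uminus ` A) (setinv (uminus ` A))"
    then obtain a b where "a \<in> A" "b \<in> A" "-x = -b + - (-a)" unfolding setprod_def setinv_def by blast
    hence "x = -a + b" by (metis minus_add minus_minus)
    thus "x \<in> setprod (setinv A) A" unfolding setprod_def setinv_def
      using \<open>a \<in> A\<close> \<open>b \<in> A\<close> by blast
  qed
  show ?thesis
  proof (rule set_eqI)
    fix S
    show "S \<in> FRc A A \<longleftrightarrow> S \<in> (\<lambda>S. uminus ` S) ` FLc (uminus ` A) (uminus ` A)"
    proof
      assume "S \<in> FRc A A"
      then obtain x where x: "x \<in> setprod (setinv A) A" "S = (\<lambda>a. a + x) ` A \<inter> A" unfolding FRc_def by blast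
      have "S = uminus ` ((\<lambda>c. (-x) + c) ` (uminus ` A) \<inter> uminus ` A)" using x(2) e[of "-x"] by simp
      moreover have "(\<lambda>c. (-x) + c) ` (uminus ` A) \<inter> uminus ` A \<in> FLc (uminus ` A) (uminus ` A)"
        unfolding FLc_def using x(1) m by blast
      ultimately show "S \<in> (\<lambda>S. uminus ` S) ` FLc (uminus ` A) (uminus ` A)" by blast
    next
      assume "S \<in> (\<lambda>S. uminus ` S) ` FLc (uminus ` A) (uminus ` A)"
      then obtain y where y: "y \<in> setprod (uminus ` A) (setinv (uminus ` A))"
        "S = uminus ` ((\<lambda>c. y + c) ` (uminus ` A) \<inter> uminus ` A)" unfolding FLc_def by blast
      have "S = (\<lambda>a. a + (- y)) ` A \<inter> A" using y(2) e[of y] by simp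
      moreover have "- y \<in> setprod (setinv A) A" using m[of "-y"] y(1) by simp
      ultimately show "S \<in> FRc A A" unfolding FRc_def by blast
    qed
  qed
qed

lemma uu: "uminus ` uminus ` (A::'a::group_add set) = A"
  by (simp add: image_image)

lemma uU: "uminus ` (UNIV::'a::group_add set) = UNIV"
  by (metis surj_def minus_minus)

lemma VCr_neg: "VCr B A = VCl (uminus ` B) (uminus ` A)"
  unfolding VCr_def VCl_def negFR by (rule VC_image) simp

lemma dimr_neg: "dim_rVC A = dim_lVC (uminus ` A)"
  unfolding dim_rVC_def dim_rVC_rel_def dim_lVC_def dim_lVC_rel_def negFRc by (rule VC_image) simp

lemma dualFL_neg: "dualVC (FL B A) = dualVC (FR (uminus ` B) (uminus ` A))"
  unfolding negFL[of B A] by (rule dualVC_image) simp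

lemma lpart:
  fixes A :: "'a::group_add set"
  shows
   "(\<forall>B. VCl B A \<le> VCl UNIV A)
    \<and> VCl UNIV A - 1 \<le> dim_lVC A \<and> dim_lVC A \<le> VCl UNIV A
    \<and> VCl UNIV A = dualVC (FR UNIV A)
    \<and> (\<forall>d. VCr UNIV A = enat d \<longrightarrow> VCl UNIV A < enat (2 * 2 ^ d))
    \<and> (\<forall>d. VCl UNIV A = enat d \<longrightarrow> VCr UNIV A < enat (2 * 2 ^ d))
    \<and> dim_lVC A = dualVC (FR (setinv A) A)
    \<and> (\<forall>d. VCr (setinv A) A = enat d \<longrightarrow> dim_lVC A < enat (2 * 2 ^ d))
    \<and> (\<forall>d. dim_lVC A = enat d \<longrightarrow> VCr (setinv A) A < enat (2 * 2 ^ d))"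
proof (intro conjI allI impI)
  fix B show "VCl B A \<le> VCl UNIV A" by (rule partA)
next
  show "VCl UNIV A - 1 \<le> dim_lVC A" by (rule partB2)
next
  show "dim_lVC A \<le> VCl UNIV A" by (rule partB1)
next
  show "VCl UNIV A = dualVC (FR UNIV A)" by (rule partC)
next
  fix d assume "VCr UNIV A = enat d"
  hence "VC (FR UNIV A) = enat d" unfolding VCr_def .
  hence "dualVC (FR UNIV A) < enat (2 * 2 ^ d)" by (rule dual_bound1)
  thus "VCl UNIV A < enat (2 * 2 ^ d)" unfolding partC .
next
  fix d assume "VCl UNIV A = enat d"
  hence "dualVC (FR UNIV A) = enat d" unfolding partC .
  hence "VC (FR UNIV A) < enat (2 * 2 ^ d)" by (rule dual_bound2)
  thus "VCr UNIV A < enat (2 * 2 ^ d)" unfolding VCr_def .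
next
  show "dim_lVC A = dualVC (FR (setinv A) A)" by (rule partD)
next
  fix d assume "VCr (setinv A) A = enat d"
  hence "VC (FR (setinv A) A) = enat d" unfolding VCr_def .
  hence "dualVC (FR (setinv A) A) < enat (2 * 2 ^ d)" by (rule dual_bound1)
  thus "dim_lVC A < enat (2 * 2 ^ d)" unfolding partD .
next
  fix d assume "dim_lVC A = enat d"
  hence "dualVC (FR (setinv A) A) = enat d" unfolding partD .
  hence "VC (FR (setinv A) A) < enat (2 * 2 ^ d)" by (rule dual_bound2)
  thus "VCr (setinv A) A < enat (2 * 2 ^ d)" unfolding VCr_def .
qed

theorem propositionA1:
  fixes A :: "'a::group_add set"
  shows
   \<comment> \<open>(a)\<close>
   "(\<forall>B. VCl B A \<le> VCl UNIV A)
    \<comment> \<open>(b)\<close>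
    \<and> VCl UNIV A - 1 \<le> dim_lVC A \<and> dim_lVC A \<le> VCl UNIV A
    \<comment> \<open>(c)\<close>
    \<and> VCl UNIV A = dualVC (FR UNIV A)
    \<and> (\<forall>d. VCr UNIV A = enat d \<longrightarrow> VCl UNIV A < enat (2 * 2 ^ d))
    \<and> (\<forall>d. VCl UNIV A = enat d \<longrightarrow> VCr UNIV A < enat (2 * 2 ^ d))
    \<comment> \<open>(d)\<close>
    \<and> dim_lVC A = dualVC (FR (setinv A) A)
    \<and> (\<forall>d. VCr (setinv A) A = enat d \<longrightarrow> dim_lVC A < enat (2 * 2 ^ d))
    \<and> (\<forall>d. dim_lVC A = enat d \<longrightarrow> VCr (setinv A) A < enat (2 * 2 ^ d))
    \<comment> \<open>(e): (a)-(d) with l and r exchanged\<close>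
    \<and> (\<forall>B. VCr B A \<le> VCr UNIV A)
    \<and> VCr UNIV A - 1 \<le> dim_rVC A \<and> dim_rVC A \<le> VCr UNIV A
    \<and> VCr UNIV A = dualVC (FL UNIV A)
    \<and> dim_rVC A = dualVC (FL (setinv A) A)
    \<and> (\<forall>d. VCl (setinv A) A = enat d \<longrightarrow> dim_rVC A < enat (2 * 2 ^ d))
    \<and> (\<forall>d. dim_rVC A = enat d \<longrightarrow> VCl (setinv A) A < enat (2 * 2 ^ d))"
  proof -
  let ?A = "uminus ` A"
  note L = lpart[of A]
  note N = lpart[of ?A]
  have rU: "VCr UNIV A = VCl UNIV ?A" using VCr_neg[of UNIV A] by (simp only: uU)
  have d: "dim_rVC A = dim_lVC ?A" by (rule dimr_neg)
  have e1: "\<forall>B. VCr B A \<le> VCr UNIV A"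
  proof
    fix B
    have "VCr B A = VCl (uminus ` B) ?A" by (rule VCr_neg)
    also have "\<dots> \<le> VCl UNIV ?A" by (rule partA)
    finally show "VCr B A \<le> VCr UNIV A" unfolding rU .
  qed
  have e2: "VCr UNIV A - 1 \<le> dim_rVC A \<and> dim_rVC A \<le> VCr UNIV A"
    unfolding rU d using partB1[of ?A] partB2[of ?A] by blast
  have e3: "VCr UNIV A = dualVC (FL UNIV A)"
    unfolding rU partC dualFL_neg[of UNIV A] uU ..
  have e4: "dim_rVC A = dualVC (FL (setinv A) A)"
  proof -
    have "dualVC (FL (setinv A) A) = dualVC (FR (uminus ` setinv A) ?A)" by (rule dualFL_neg)
    moreover have "uminus ` setinv A = setinv ?A" unfolding setinv_def ..
    ultimately show ?thesis using d partD[of ?A] by simp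
  qed
  have e5: "VCr (setinv ?A) ?A = VCl (setinv A) A"
    by (simp add: VCr_neg setinv_def uu)
  have e6: "(\<forall>d. VCl (setinv A) A = enat d \<longrightarrow> dim_rVC A < enat (2 * 2 ^ d))
    \<and> (\<forall>d. dim_rVC A = enat d \<longrightarrow> VCl (setinv A) A < enat (2 * 2 ^ d))"
    using N unfolding e5 d by blast
  show ?thesis using L e1 e2 e3 e4 e6 by blast
qed

end
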